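(* (1) If $e$ is a quasi-identity of a ring, then so is $e^n$ for each $n\in\mathbb N$. (2) A contractive quasi-identity of a normed algebra is an idempotent, and hence its norm is either $0$ or $1$. (3) A contractive quasi-identity of an operator algebra $A\subset B(H)$ is unique if it exists, and it is Hermitian (hence an orthogonal projection).
   Context: A quasi-identity of a ring $R$ is an element $e\in R$ with $r=er+re-ere$ for all $r\in R$. A quasi-identity $e$ of a normed algebra is contractive if $\|e\|\le1$. An operator algebra $A\subset B(H)$ is a norm-closed subalgebra of $B(H)$ for a Hilbert space $H$. *)

theory Defs
  imports "HOL-Analysis.Analysis"
begin

definition quasi_identity :: "'a::ring \<Rightarrow> bool" where
  "quasi_identity e \<longleftrightarrow> (\<forall>r. r = e * r + r * e - e * r * e)"

text \<open>Positive powers in a not necessarily unital ring: rpow n e = e^n for n >= 1.\<close>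
fun rpow :: "nat \<Rightarrow> 'a::semigroup_mult \<Rightarrow> 'a" where
  "rpow 0 e = undefined"
| "rpow (Suc 0) e = e"
| "rpow (Suc (Suc n)) e = e * rpow (Suc n) e"

definition operator_algebra :: "('h::{real_inner,complete_space} \<Rightarrow>\<^sub>L 'h) set \<Rightarrow> bool" where
  "operator_algebra A \<longleftrightarrow>
     0 \<in> A \<and> (\<forall>x\<in>A. \<forall>y\<in>A. x + y \<in> A) \<and> (\<forall>c. \<forall>x\<in>A. c *\<^sub>R x \<in> A)
     \<and> (\<forall>x\<in>A. \<forall>y\<in>A. x o\<^sub>L y \<in> A) \<and> closed A"

definition op_quasi_identity ::
  "('h::{real_inner,complete_space} \<Rightarrow>\<^sub>L 'h) set \<Rightarrow> ('h \<Rightarrow>\<^sub>L 'h) \<Rightarrow> bool" where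
  "op_quasi_identity A e \<longleftrightarrow> e \<in> A \<and>
     (\<forall>r\<in>A. r = (e o\<^sub>L r) + (r o\<^sub>L e) - (e o\<^sub>L r o\<^sub>L e))"

definition hermitian_op :: "('h::{real_inner,complete_space} \<Rightarrow>\<^sub>L 'h) \<Rightarrow> bool" where
  "hermitian_op T \<longleftrightarrow> (\<forall>x y. inner (T x) y = inner x (T y))"

end

theory Submission
  imports Defs
begin

lemma rpow_Suc_right: "rpow (Suc (Suc n)) e = rpow (Suc n) e * (e::'a::semigroup_mult)"
proof (induction n)
  case 0 then show ?case by simp
next
  case (Suc n)
  have "rpow (Suc (Suc (Suc n))) e = e * rpow (Suc (Suc n)) e" by simp
  also have "\<dots> = e * (rpow (Suc n) e * e)" using Suc by simp
  also have "\<dots> = (e * rpow (Suc n) e) * e" by (simp add: mult.assoc)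
  finally show ?case by simp
qed

lemma F_left:
  fixes e :: "'a::ring"
  assumes q: "\<forall>r. r = e * r + r * e - e * r * e"
  shows "r - e * r - r * rpow (Suc m) e + e * r * rpow (Suc m) e = 0"
proof (induction m arbitrary: r)
  case 0
  have "r = e * r + r * e - e * r * e" using q by blast
  then show ?case by (simp add: algebra_simps)
next
  case (Suc m)
  have h1: "r - e * r - r * e + e * r * e = 0"
    using q[rule_format, of r] by (simp add: algebra_simps)
  have h2: "(r - e * r - r * rpow (Suc m) e + e * r * rpow (Suc m) e) * e = 0"
    using Suc by simp
  have "r - e * r - r * rpow (Suc (Suc m)) e + e * r * rpow (Suc (Suc m)) e
      = (r - e * r - r * e + e * r * e) + (r - e * r - r * rpow (Suc m) e + e * r * rpow (Suc m) e) * e"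
    by (simp only: rpow_Suc_right) (simp add: algebra_simps)
  then show ?case using h1 h2 by simp
qed

lemma F_both:
  fixes e :: "'a::ring"
  assumes q: "\<forall>r. r = e * r + r * e - e * r * e"
  shows "r - rpow (Suc k) e * r - r * rpow (Suc m) e + rpow (Suc k) e * r * rpow (Suc m) e = 0"
proof (induction k arbitrary: r)
  case 0
  show ?case using F_left[OF q] by simp
next
  case (Suc k)
  have h2: "e * (r - rpow (Suc k) e * r - r * rpow (Suc m) e + rpow (Suc k) e * r * rpow (Suc m) e) = 0"
    using Suc by simp
  have "r - rpow (Suc (Suc k)) e * r - r * rpow (Suc m) e + rpow (Suc (Suc k)) e * r * rpow (Suc m) e
     = (r - e * r - r * rpow (Suc m) e + e * r * rpow (Suc m) e)
       + e * (r - rpow (Suc k) e * r - r * rpow (Suc m) e + rpow (Suc k) e * r * rpow (Suc m) e)"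
    by (simp add: algebra_simps mult.assoc)
  then show ?case using h2 F_left[OF q] by simp
qed

lemma part1:
  fixes e :: "'a::ring"
  assumes "quasi_identity e" "n \<ge> 1"
  shows "quasi_identity (rpow n e)"
proof -
  obtain k where n: "n = Suc k" using assms(2) by (cases n) auto
  have q: "\<forall>r. r = e * r + r * e - e * r * e" using assms(1) unfolding quasi_identity_def by blast
  show ?thesis unfolding quasi_identity_def n
  proof
    fix r
    have "r - rpow (Suc k) e * r - r * rpow (Suc k) e + rpow (Suc k) e * r * rpow (Suc k) e = 0"
      using F_both[OF q] by blast
    then show "r = rpow (Suc k) e * r + r * rpow (Suc k) e - rpow (Suc k) e * r * rpow (Suc k) e"
      by (simp add: algebra_simps)
  qed
qed

lemma lin_bound_zero:
  fixes e d :: "'v::real_normed_vector"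
  assumes "\<And>n. norm (e + real n *\<^sub>R d) \<le> 1" "norm e \<le> 1"
  shows "d = 0"
proof (rule ccontr)
  assume "d \<noteq> 0"
  then have dp: "norm d > 0" by simp
  obtain n :: nat where n: "real n > 2 / norm d" using reals_Archimedean2 by blast
  have "real n * norm d = norm (real n *\<^sub>R d)" by simp
  also have "\<dots> = norm ((e + real n *\<^sub>R d) - e)" by simp
  also have "\<dots> \<le> norm (e + real n *\<^sub>R d) + norm e" by (rule norm_triangle_ineq4)
  also have "\<dots> \<le> 2" using assms by (smt (verit))
  finally have "real n * norm d \<le> 2" .
  moreover have "real n * norm d > 2" using n dp by (simp add: field_simps)
  ultimately show False by simp
qed

lemma part2:
  fixes e :: "'b::real_normed_algebra"
  assumes "quasi_identity e" "norm e \<le> 1"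
  shows "e * e = e \<and> (norm e = 0 \<or> norm e = 1)"
proof -
  have qe: "e = e * e + e * e - e * e * e" using assms(1) unfolding quasi_identity_def by blast
  define d where "d = e * e - e"
  have ed: "e * d = d" unfolding d_def using qe by (simp add: algebra_simps mult.assoc)
  have pw: "rpow (Suc n) e = e + real n *\<^sub>R d" for n
  proof (induction n)
    case 0 then show ?case by simp
  next
    case (Suc n)
    have "rpow (Suc (Suc n)) e = e * (e + real n *\<^sub>R d)" using Suc by simp
    also have "\<dots> = e * e + real n *\<^sub>R (e * d)" by (simp add: distrib_left)
    also have "\<dots> = e + d + real n *\<^sub>R d" using ed by (simp add: d_def)
    also have "\<dots> = e + real (Suc n) *\<^sub>R d" by (simp add: algebra_simps)
    finally show ?case .
  qed
  have nb: "norm (rpow (Suc n) e) \<le> 1" for n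
  proof (induction n)
    case 0 then show ?case using assms(2) by simp
  next
    case (Suc n)
    have "norm (rpow (Suc (Suc n)) e) = norm (e * rpow (Suc n) e)" by simp
    also have "\<dots> \<le> norm e * norm (rpow (Suc n) e)" by (rule norm_mult_ineq)
    also have "\<dots> \<le> 1 * 1" using Suc assms(2) by (intro mult_mono) auto
    finally show ?case by simp
  qed
  have "d = 0" using lin_bound_zero[of e d] nb pw assms(2) by metis
  then have ee: "e * e = e" unfolding d_def by simp
  have "norm e \<le> norm e * norm e" using norm_mult_ineq[of e e] ee by simp
  then have "norm e = 0 \<or> norm e = 1" using assms(2)
  proof (cases "norm e = 0")
    case False
    then have "0 < norm e" by simp
    moreover have "norm e * 1 \<le> norm e * norm e" using \<open>norm e \<le> norm e * norm e\<close> by simp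
    ultimately have "1 \<le> norm e" using mult_left_le_imp_le by blast
    then show ?thesis using assms(2) by simp
  qed simp
  with ee show ?thesis by simp
qed

lemma op_idem:
  fixes e :: "'h::{real_inner,complete_space} \<Rightarrow>\<^sub>L 'h"
  assumes qe: "e = (e o\<^sub>L e) + (e o\<^sub>L e) - (e o\<^sub>L e o\<^sub>L e)" and ne: "norm e \<le> 1"
  shows "e o\<^sub>L e = e"
proof -
  have px: "e (e (e x)) = 2 *\<^sub>R e (e x) - e x" for x
  proof -
    have "e x = e (e x) + e (e x) - e (e (e x))"
      by (subst qe) (simp add: blinfun.bilinear_simps)
    then show ?thesis by (simp add: algebra_simps scaleR_2)
  qed
  define d where "d = (e o\<^sub>L e) - e"
  have step: "e + real (Suc n) *\<^sub>R d = e o\<^sub>L (e + real n *\<^sub>R d)" for n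
  proof (rule blinfun_eqI)
    fix x
    show "(e + real (Suc n) *\<^sub>R d) x = (e o\<^sub>L (e + real n *\<^sub>R d)) x"
      unfolding d_def by (simp add: blinfun.bilinear_simps px algebra_simps scaleR_2)
  qed
  have nb: "norm (e + real n *\<^sub>R d) \<le> 1" for n
  proof (induction n)
    case 0 then show ?case using ne by simp
  next
    case (Suc n)
    have "norm (e + real (Suc n) *\<^sub>R d) \<le> norm e * norm (e + real n *\<^sub>R d)"
      unfolding step by (rule norm_blinfun_compose)
    also have "\<dots> \<le> 1 * 1" using Suc ne by (intro mult_mono) auto
    finally show ?case by simp
  qed
  have "d = 0" using lin_bound_zero[of e d] nb ne by metis
  then show ?thesis unfolding d_def by simp
qed

lemma contr_idem_herm:
  fixes e :: "'h::{real_inner,complete_space} \<Rightarrow>\<^sub>L 'h"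
  assumes idem: "e o\<^sub>L e = e" and ne: "norm e \<le> 1"
  shows "hermitian_op e"
proof -
  have ee: "e (e x) = e x" for x using idem by (metis blinfun_apply_blinfun_compose)
  have orth: "inner (e x) (y - e y) = 0" for x y
  proof -
    define a where "a = e x"
    define b where "b = y - e y"
    have ea: "e a = a" unfolding a_def using ee by simp
    have eb: "e b = 0" unfolding b_def using ee by (simp add: blinfun.bilinear_simps)
    have ineq: "0 \<le> 2 * t * inner a b + t * t * inner b b" for t :: real
    proof -
      have "e (a + t *\<^sub>R b) = a" using ea eb by (simp add: blinfun.bilinear_simps)
      then have "norm a \<le> norm e * norm (a + t *\<^sub>R b)" by (metis norm_blinfun)
      also have "\<dots> \<le> 1 * norm (a + t *\<^sub>R b)" using ne by (intro mult_right_mono) auto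
      finally have "norm a \<le> norm (a + t *\<^sub>R b)" by simp
      then have "(norm a)^2 \<le> (norm (a + t *\<^sub>R b))^2" by (simp add: power_mono)
      then have "inner a a \<le> inner (a + t *\<^sub>R b) (a + t *\<^sub>R b)" by (simp add: power2_norm_eq_inner)
      then show ?thesis by (simp add: inner_add_left inner_add_right inner_commute algebra_simps)
    qed
    show ?thesis
    proof (rule ccontr)
      assume c: "inner (e x) (y - e y) \<noteq> 0"
      then have cab: "inner a b \<noteq> 0" unfolding a_def b_def .
      then have "b \<noteq> 0" by auto
      then have bp: "inner b b > 0" by simp
      have "0 \<le> 2 * (- inner a b / inner b b) * inner a b + (- inner a b / inner b b) * (- inner a b / inner b b) * inner b b"
        by (rule ineq)
      also have "\<dots> = - (inner a b * inner a b / inner b b)" using bp by (simp add: field_simps power2_eq_square)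
      also have "\<dots> < 0"
      proof -
        have "inner a b * inner a b > 0" using cab by (auto simp add: zero_less_mult_iff linorder_neq_iff)
        then have "inner a b * inner a b / inner b b > 0" using bp by (rule divide_pos_pos)
        then show ?thesis by linarith
      qed
      finally show False by simp
    qed
  qed
  have key: "inner (e x) y = inner (e x) (e y)" for x y
  proof -
    have "inner (e x) y = inner (e x) (e y) + inner (e x) (y - e y)" by (simp add: inner_diff_right)
    then show ?thesis using orth by simp
  qed
  show ?thesis unfolding hermitian_op_def
  proof (intro allI)
    fix x y
    have "inner x (e y) = inner (e y) x" by (rule inner_commute)
    also have "\<dots> = inner (e y) (e x)" by (rule key)
    also have "\<dots> = inner (e x) (e y)" by (rule inner_commute)
    also have "\<dots> = inner (e x) y" by (rule key[symmetric])
    finally show "inner (e x) y = inner x (e y)" by simp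
  qed
qed

lemma herm_red:
  fixes e f :: "'h::{real_inner,complete_space} \<Rightarrow>\<^sub>L 'h"
  assumes qf: "f = (e o\<^sub>L f) + (f o\<^sub>L e) - (e o\<^sub>L f o\<^sub>L e)"
    and he: "hermitian_op e" and hf: "hermitian_op f" and ff: "f o\<^sub>L f = f"
  shows "f x = f (e x)"
proof -
  have hee: "inner (e u) v = inner u (e v)" for u v using he unfolding hermitian_op_def by blast
  have hff: "inner (f u) v = inner u (f v)" for u v using hf unfolding hermitian_op_def by blast
  have fff: "f (f u) = f u" for u using ff by (metis blinfun_apply_blinfun_compose)
  define u where "u = x - e x"
  have g0: "f u - e (f u) = 0"
  proof -
    have "f x = e (f x) + f (e x) - e (f (e x))"
      by (subst qf) (simp add: blinfun.bilinear_simps)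
    then show ?thesis unfolding u_def by (simp add: blinfun.bilinear_simps algebra_simps)
  qed
  have "inner (f u - e (f u)) x = inner (f u) x - inner (f u) (e x)"
    by (simp add: inner_diff_left hee)
  also have "\<dots> = inner (f u) u" unfolding u_def by (simp add: inner_diff_right)
  also have "\<dots> = inner (f (f u)) u" by (simp add: fff)
  also have "\<dots> = inner (f u) (f u)" by (simp add: hff)
  finally have "inner (f u) (f u) = 0" using g0 by simp
  then have "f u = 0" by simp
  then show ?thesis unfolding u_def by (simp add: blinfun.bilinear_simps)
qed

lemma uniq:
  fixes e f :: "'h::{real_inner,complete_space} \<Rightarrow>\<^sub>L 'h"
  assumes qfe: "f = (e o\<^sub>L f) + (f o\<^sub>L e) - (e o\<^sub>L f o\<^sub>L e)"
    and qef: "e = (f o\<^sub>L e) + (e o\<^sub>L f) - (f o\<^sub>L e o\<^sub>L f)"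
    and he: "hermitian_op e" and hf: "hermitian_op f" and ee: "e o\<^sub>L e = e" and ff: "f o\<^sub>L f = f"
  shows "e = f"
proof (rule blinfun_eqI)
  fix x
  have hee: "inner (e u) v = inner u (e v)" for u v using he unfolding hermitian_op_def by blast
  have hff: "inner (f u) v = inner u (f v)" for u v using hf unfolding hermitian_op_def by blast
  have r1: "f u = f (e u)" for u by (rule herm_red[OF qfe he hf ff])
  have r2: "e u = e (f u)" for u by (rule herm_red[OF qef hf he ee])
  have i: "inner (f x) y = inner (e x) y" for y
  proof -
    have "inner (f x) y = inner (f (e x)) y" using r1 by simp
    also have "\<dots> = inner (e x) (f y)" by (rule hff)
    also have "\<dots> = inner x (e (f y))" by (rule hee)
    also have "\<dots> = inner x (e y)" using r2 by simp
    also have "\<dots> = inner (e x) y" by (rule hee[symmetric])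
    finally show ?thesis .
  qed
  have "inner (f x - e x) (f x - e x) = 0" using i by (simp add: inner_diff_left)
  then show "e x = f x" by simp
qed

theorem proposition4p4:
  shows "(\<forall>(e::'a::ring) n. quasi_identity e \<and> n \<ge> 1 \<longrightarrow> quasi_identity (rpow n e))
    \<and> (\<forall>e::'b::real_normed_algebra. quasi_identity e \<and> norm e \<le> 1 \<longrightarrow>
          e * e = e \<and> (norm e = 0 \<or> norm e = 1))
    \<and> (\<forall>A::('h::{real_inner,complete_space} \<Rightarrow>\<^sub>L 'h) set. operator_algebra A \<longrightarrow>
          (\<forall>e f. op_quasi_identity A e \<and> norm e \<le> 1 \<and> op_quasi_identity A f \<and> norm f \<le> 1
                 \<longrightarrow> e = f)
        \<and> (\<forall>e. op_quasi_identity A e \<and> norm e \<le> 1 \<longrightarrow> hermitian_op e))"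
proof -
  have P1: "\<forall>(e::'a::ring) n. quasi_identity e \<and> n \<ge> 1 \<longrightarrow> quasi_identity (rpow n e)"
    using part1 by blast
  have P2: "\<forall>e::'b::real_normed_algebra. quasi_identity e \<and> norm e \<le> 1 \<longrightarrow>
          e * e = e \<and> (norm e = 0 \<or> norm e = 1)" using part2 by blast
  have P3: "(\<forall>e f. op_quasi_identity A e \<and> norm e \<le> 1 \<and> op_quasi_identity A f \<and> norm f \<le> 1
                 \<longrightarrow> e = f)
        \<and> (\<forall>e. op_quasi_identity A e \<and> norm e \<le> 1 \<longrightarrow> hermitian_op e)"
    for A :: "('h::{real_inner,complete_space} \<Rightarrow>\<^sub>L 'h) set"
  proof (intro conjI allI impI)
    fix e f
    assume a: "op_quasi_identity A e \<and> norm e \<le> 1 \<and> op_quasi_identity A f \<and> norm f \<le> 1"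
    have eA: "e \<in> A" and fA: "f \<in> A" using a unfolding op_quasi_identity_def by auto
    have qe: "\<forall>r\<in>A. r = (e o\<^sub>L r) + (r o\<^sub>L e) - (e o\<^sub>L r o\<^sub>L e)"
     and qf: "\<forall>r\<in>A. r = (f o\<^sub>L r) + (r o\<^sub>L f) - (f o\<^sub>L r o\<^sub>L f)"
      using a unfolding op_quasi_identity_def by auto
    have ee: "e o\<^sub>L e = e" using op_idem qe eA a by blast
    have ff: "f o\<^sub>L f = f" using op_idem qf fA a by blast
    have he: "hermitian_op e" using contr_idem_herm[OF ee] a by blast
    have hf: "hermitian_op f" using contr_idem_herm[OF ff] a by blast
    show "e = f"
      by (rule uniq[OF qe[rule_format, OF fA] qf[rule_format, OF eA] he hf ee ff])
  next
    fix e
    assume a: "op_quasi_identity A e \<and> norm e \<le> 1"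
    have eA: "e \<in> A" using a unfolding op_quasi_identity_def by auto
    have qe: "\<forall>r\<in>A. r = (e o\<^sub>L r) + (r o\<^sub>L e) - (e o\<^sub>L r o\<^sub>L e)"
      using a unfolding op_quasi_identity_def by auto
    have ee: "e o\<^sub>L e = e" using op_idem qe eA a by blast
    show "hermitian_op e" using contr_idem_herm[OF ee] a by blast
  qed
  show ?thesis using P1 P2 P3 by blast
qed

end
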